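(* In the calculus described in the context, for every well-typed expression $e:A\leadsto B$ (in which every user-defined operation carries a consistent incrementalization, and every occurrence of $+$ is at a type $A$ with $[\![A]\!]=[\![A]\!]'$ and with $\oplus$ associative and commutative on $[\![A]\!]$), the triple $(C_e,i_e,d_e)$ produced by the incrementalization transformation is a value preserving incrementalization of $[\![e]\!]$: for all $x\in[\![A]\!]$ and all finite lists $xs'$ of changes in $[\![A]\!]'$, $(\mathsf{iter}\,(C_e,i_e,d_e)\,x\,xs')_1=[\![e]\!](\mathsf{sum}\,x\,xs')$.
   Context: Fix a container: a type $S$ of shapes and for each $s:S$ an index type $\mathrm{Pos}(s)$ with decidable equality. Fix a base change structure $(\beta,\beta',\oplus,\ominus)$ with $x\oplus(y\ominus x)=y$. Object types: $A,B::=\mathsf{b}\mid F_sA\mid A\times B\mid A+B$. Value/change types with $\oplus,\ominus$: $[\![\mathsf b]\!]=\beta$, $[\![\mathsf b]\!]'=\beta'$; $[\![F_sA]\!]=\mathrm{Pos}(s)\to[\![A]\!]$, $[\![F_sA]\!]'=\mathrm{Pos}(s)\to[\![A]\!]'$ (pointwise); products componentwise; $[\![A+B]\!]=[\![A]\!]+[\![B]\!]$ ($\iota_1,\iota_2$), $[\![A+B]\!]'$ with constructors $\mathsf{cl}\,a',\mathsf{cr}\,b',\mathsf{sl}\,a,\mathsf{sr}\,b,\mathsf{null}$, where $\iota_1x\oplus\mathsf{cl}x'=\iota_1(x\oplus x')$, $\iota_1x\oplus\mathsf{cr}y'=\iota_1x$, $\iota_2y\oplus\mathsf{cl}x'=\iota_2y$,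 $\iota_2y\oplus\mathsf{cr}y'=\iota_2(y\oplus y')$, $z\oplus\mathsf{sl}x=\iota_1x$, $z\oplus\mathsf{sr}y=\iota_2y$, $z\oplus\mathsf{null}=z$; $\iota_1x\ominus\iota_1y=\mathsf{cl}(x\ominus y)$, $\iota_1x\ominus\iota_2y=\mathsf{sl}x$, $\iota_2x\ominus\iota_1y=\mathsf{sr}x$, $\iota_2x\ominus\iota_2y=\mathsf{cr}(x\ominus y)$. An incrementalization of $f:[\![A]\!]\to[\![B]\!]$ is $(C,i,d)$ with $i:[\![A]\!]\to[\![B]\!]\times C$, $d:[\![A]\!]'\to C\to[\![B]\!]'\times C$; it is consistent if $(i\,x)_1=f\,x$, $f(x\oplus x')=f\,x\oplus(d\,x'(i\,x)_2)_1$, $(i(x\oplus x'))_2=(d\,x'(i\,x)_2)_2$. A user-defined operation $o:\mathsf{Op}\,A\,B$ is a function $f_o$ with a consistent incrementalization of $f_o$. Define $\mathsf{iter}\,(C,i,d)\,x\,[\,]=i\,x$, $\mathsf{iter}\,(C,i,d)\,x\,(x'::xs')=(y\oplus y',c_2)$ where $(y,c_1)=\mathsf{iter}\,(C,i,d)\,x\,xs'$, $(y',c_2)=d\,x'\,c_1$; $\mathsf{sum}\,x\,[\,]=x$, $\mathsf{sum}\,x\,(x'::xs')=(\mathsf{sum}\,x\,xs')\oplus x'$. Expressions, typing and denotation ($i:\mathrm{Pos}(s)$; $r:\mathrm{Pos}(s_2)\to\mathrm{Pos}(s_1)$; $p:\mathrm{Pos}(s)\to\mathbb B$; $c\in[\![A]\!]$):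 $e_1;e_2$ (composition, $[\![e_2]\!]\circ[\![e_1]\!]$); $e_1\times e_2:A\times C\leadsto B\times D$ (componentwise); $\mathsf{id}$; $\mathsf{dup}:A\leadsto A\times A$, $x\mapsto(x,x)$; $\mathsf{fst},\mathsf{snd}$; $\mathsf{cst}\,c:B\leadsto A$, $x\mapsto c$; $+:A\times A\leadsto A$, $(x,y)\mapsto x\oplus y$ (only when $[\![A]\!]=[\![A]\!]'$); $\mathsf{op}\,o:A\leadsto B$ denoting $f_o$; $\mathsf{map}\,e:F_sA\leadsto F_sB$, $x\mapsto\lambda i.[\![e]\!](x\,i)$; $\mathsf{zip}:F_sA\times F_sB\leadsto F_s(A\times B)$, $(x,y)\mapsto\lambda i.(x\,i,y\,i)$; $\mathsf{get}\,i:F_sA\leadsto A$, $x\mapsto x\,i$; $\mathsf{set}\,i:A\times F_sA\leadsto F_sA$, $(x,a)\mapsto\lambda j.\,\mathsf{if}\ i=j\ \mathsf{then}\ x\ \mathsf{else}\ a\,j$; $\mathsf{reshape}\,r:F_{s_1}A\leadsto F_{s_2}A$, $x\mapsto\lambda i.x(r\,i)$; $\mathsf{replicate}\,s:A\leadsto F_sA$, $x\mapsto\lambda i.x$; $\mathsf{tp}:F_{s_1}(F_{s_2}A)\leadsto F_{s_2}(F_{s_1}A)$, $x\mapsto\lambda i\lambda j.x\,j\,i$; $\mathsf{filter}\,p:A\times F_sA\leadsto F_sA$, $(x,a)\mapsto\lambda i.\,\mathsf{if}\ p\,i\ \mathsf{then}\ a\,i\ \mathsf{else}\ x$; $\mathsf{inl},\mathsf{inr}$;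 $\mathsf{fuse}:A+A\leadsto A$, $\iota_kx\mapsto x$; $\mathsf{distr}:A\times(B+C)\leadsto A\times B+A\times C$, $(x,\iota_ky)\mapsto\iota_k(x,y)$; $e_1\|e_2:A+C\leadsto B+D$, $\iota_1x\mapsto\iota_1([\![e_1]\!]x)$, $\iota_2x\mapsto\iota_2([\![e_2]\!]x)$. Incrementalization transformation $e\mapsto(C_e,i_e,d_e)$: • $e\in\{\mathsf{id},\mathsf{dup},\mathsf{fst},\mathsf{snd},\mathsf{zip},\mathsf{tp},\mathsf{get}\,i,\mathsf{set}\,i,\mathsf{reshape}\,r,\mathsf{replicate}\,s,\mathsf{filter}\,p\}$: $C_e=\mathsf{Unit}$, $i_ex=([\![e]\!]x,\star)$, $d_ex'\star=(e\text{'s defining equation applied to the change }x',\star)$. $\mathsf{inl}/\mathsf{inr}$: $C=\mathsf{Unit}$, $i\,x=(\iota_kx,\star)$, derivatives $x'\mapsto\mathsf{cl}\,x'$, resp. $y'\mapsto\mathsf{cr}\,y'$. • $\mathsf{cst}\,c$: $C=\mathsf{Unit}$, $i\,x=(c,\star)$, $d\,x'\star=(c\ominus c,\star)$. $+$: $C=\mathsf{Unit}$, $i(x,y)=(x\oplus y,\star)$, $d(x',y')\star=(x'\oplus y',\star)$. $\mathsf{op}\,o$: the given incrementalization. • $f;g$: $C=C_f\times C_g$; $i\,x=(z,(c_1,c_2))$, $(y,c_1)=i_fx$, $(z,c_2)=i_gy$; $d\,x'(c_1,c_2)=(z',(c_1',c_2'))$, $(y',c_1')=d_fx'c_1$, $(z',c_2')=d_gy'c_2$.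 • $f\times g$: $C=C_f\times C_g$, initialization and derivative computed componentwise from those of $f$ and $g$. • $\mathsf{map}_sf$: $C=\mathrm{Pos}(s)\to C_f$, $i\,x=(\lambda j.(i_f(xj))_1,\lambda j.(i_f(xj))_2)$, $d\,x'c=(\lambda j.(d_f(x'j)(cj))_1,\lambda j.(d_f(x'j)(cj))_2)$. • $\mathsf{fuse}$: $C=[\![A]\!]+[\![A]\!]$, $i(\iota_kx)=(x,\iota_kx)$; $d(\mathsf{cl}x')(\iota_1x)=(x',\iota_1(x\oplus x'))$, $d(\mathsf{cr}y')(\iota_1x)=(x\ominus x,\iota_1x)$, $d(\mathsf{cl}x')(\iota_2y)=(y\ominus y,\iota_2y)$, $d(\mathsf{cr}y')(\iota_2y)=(y',\iota_2(y\oplus y'))$, $d(\mathsf{sl}x)(\iota_kx_0)=(x\ominus x_0,\iota_1x)$, $d(\mathsf{sr}y)(\iota_ky_0)=(y\ominus y_0,\iota_2y)$, $d\,\mathsf{null}(\iota_kx)=(x\ominus x,\iota_kx)$. • $\mathsf{distr}$: $C=[\![A]\!]\times([\![B]\!]+[\![C]\!])$, $i(x,\iota_ky)=(\iota_k(x,y),(x,\iota_ky))$; $d(x',\mathsf{cl}y')(x,\iota_1y)=(\mathsf{cl}(x',y'),(x\oplus x',\iota_1(y\oplus y')))$; $d(x',\mathsf{cr}y')(x,\iota_1y)=(\mathsf{cl}(x',y\ominus y),(x\oplus x',\iota_1y))$; $d(x',\mathsf{cl}y')(x,\iota_2y)=(\mathsf{cr}(x',y\ominus y),(x\oplus x',\iota_2y))$;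 $d(x',\mathsf{cr}y')(x,\iota_2y)=(\mathsf{cr}(x',y'),(x\oplus x',\iota_2(y\oplus y')))$; $d(x',\mathsf{sl}y)(x,\_)=(\mathsf{sl}(x\oplus x',y),(x\oplus x',\iota_1y))$; $d(x',\mathsf{sr}y)(x,\_)=(\mathsf{sr}(x\oplus x',y),(x\oplus x',\iota_2y))$; $d(x',\mathsf{null})(x,\iota_1y)=(\mathsf{cl}(x',y\ominus y),(x\oplus x',\iota_1y))$; $d(x',\mathsf{null})(x,\iota_2y)=(\mathsf{cr}(x',y\ominus y),(x\oplus x',\iota_2y))$. • $f\|g$ ($f:A_1\leadsto B_1,g:A_2\leadsto B_2$): $C=C_f\times[\![B_1]\!]+C_g\times[\![B_2]\!]$; $i(\iota_1x)=(\iota_1y,\iota_1(c,y))$ with $(y,c)=i_fx$ (analogously $\iota_2$, $g$); $d(\mathsf{cl}x')(\iota_1(c,y))=(\mathsf{cl}y',\iota_1(c',y\oplus y'))$, $(y',c')=d_fx'c$; $d(\mathsf{cr}x')(\iota_1(c,y))=(\mathsf{null},\iota_1(c,y))$; $d(\mathsf{cl}x')(\iota_2(c,y))=(\mathsf{null},\iota_2(c,y))$; $d(\mathsf{cr}x')(\iota_2(c,y))=(\mathsf{cr}y',\iota_2(c',y\oplus y'))$, $(y',c')=d_gx'c$; with $(y,c)=i_fx$: $d(\mathsf{sl}x)(\iota_1(c_0,y_0))=(\mathsf{cl}(y\ominus y_0),\iota_1(c,y))$, $d(\mathsf{sl}x)(\iota_2\_)=(\mathsf{sl}y,\iota_1(c,y))$;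 with $(y,c)=i_gx$: $d(\mathsf{sr}x)(\iota_1\_)=(\mathsf{sr}y,\iota_2(c,y))$, $d(\mathsf{sr}x)(\iota_2(c_0,y_0))=(\mathsf{cr}(y\ominus y_0),\iota_2(c,y))$; $d\,\mathsf{null}\,z=(\mathsf{null},z)$. *)

theory Defs
  imports Main
begin

text \<open>The container (shapes 's, positions Pos(s) as subsets of a type 'p) and the base
change structure (carriers beta, beta' inside a common type 'b, with oplus and ominus)
are bundled in a record.\<close>

record ('s, 'p, 'b) cstr =
  pos :: "'s \<Rightarrow> 'p set"
  bval :: "'b set"
  bchg :: "'b set"
  bpl :: "'b \<Rightarrow> 'b \<Rightarrow> 'b"
  bmi :: "'b \<Rightarrow> 'b \<Rightarrow> 'b"

definition base_change_structure :: "('s, 'p, 'b) cstr \<Rightarrow> bool" where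
  "base_change_structure K \<longleftrightarrow>
     (\<forall>x\<in>bval K. \<forall>x'\<in>bchg K. bpl K x x' \<in> bval K) \<and>
     (\<forall>x\<in>bval K. \<forall>y\<in>bval K. bmi K x y \<in> bchg K) \<and>
     (\<forall>x\<in>bval K. \<forall>y\<in>bval K. bpl K x (bmi K y x) = y)"

datatype 's ty = TB | TF 's "'s ty" | TProd "'s ty" "'s ty" | TSum "'s ty" "'s ty"

text \<open>Universal domain for values, changes and caches.\<close>
datatype ('p, 'b) val =
    VB 'b
  | VFun "'p \<Rightarrow> ('p, 'b) val"
  | VPair "('p, 'b) val" "('p, 'b) val"
  | VInl "('p, 'b) val" | VInr "('p, 'b) val"
  | VCl "('p, 'b) val" | VCr "('p, 'b) val" | VSl "('p, 'b) val" | VSr "('p, 'b) val"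
  | VNull
  | VUnit
  | VUndef

definition vfun :: "('s, 'p, 'b) cstr \<Rightarrow> 's \<Rightarrow> ('p \<Rightarrow> ('p, 'b) val) \<Rightarrow> ('p, 'b) val" where
  "vfun K s g = VFun (\<lambda>i. if i \<in> pos K s then g i else VUndef)"

primrec vals :: "('s, 'p, 'b) cstr \<Rightarrow> 's ty \<Rightarrow> ('p, 'b) val set" where
  "vals K TB = VB ` bval K"
| "vals K (TF s A) = {VFun f | f. (\<forall>i\<in>pos K s. f i \<in> vals K A) \<and> (\<forall>i. i \<notin> pos K s \<longrightarrow> f i = VUndef)}"
| "vals K (TProd A B) = {VPair x y | x y. x \<in> vals K A \<and> y \<in> vals K B}"
| "vals K (TSum A B) = VInl ` vals K A \<union> VInr ` vals K B"

primrec chgs :: "('s, 'p, 'b) cstr \<Rightarrow> 's ty \<Rightarrow> ('p, 'b) val set" where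
  "chgs K TB = VB ` bchg K"
| "chgs K (TF s A) = {VFun f | f. (\<forall>i\<in>pos K s. f i \<in> chgs K A) \<and> (\<forall>i. i \<notin> pos K s \<longrightarrow> f i = VUndef)}"
| "chgs K (TProd A B) = {VPair x y | x y. x \<in> chgs K A \<and> y \<in> chgs K B}"
| "chgs K (TSum A B) = VCl ` chgs K A \<union> VCr ` chgs K B \<union> VSl ` vals K A \<union> VSr ` vals K B \<union> {VNull}"

primrec oplus :: "('s, 'p, 'b) cstr \<Rightarrow> 's ty \<Rightarrow> ('p, 'b) val \<Rightarrow> ('p, 'b) val \<Rightarrow> ('p, 'b) val" where
  "oplus K TB v v' = (case (v, v') of (VB x, VB x') \<Rightarrow> VB (bpl K x x') | _ \<Rightarrow> VUndef)"
| "oplus K (TF s A) v v' =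
     (case (v, v') of (VFun f, VFun g) \<Rightarrow> vfun K s (\<lambda>i. oplus K A (f i) (g i)) | _ \<Rightarrow> VUndef)"
| "oplus K (TProd A B) v v' =
     (case (v, v') of (VPair x y, VPair x' y') \<Rightarrow> VPair (oplus K A x x') (oplus K B y y')
        | _ \<Rightarrow> VUndef)"
| "oplus K (TSum A B) z v' =
     (case v' of
        VCl x' \<Rightarrow> (case z of VInl x \<Rightarrow> VInl (oplus K A x x') | VInr y \<Rightarrow> VInr y | _ \<Rightarrow> VUndef)
      | VCr y' \<Rightarrow> (case z of VInl x \<Rightarrow> VInl x | VInr y \<Rightarrow> VInr (oplus K B y y') | _ \<Rightarrow> VUndef)
      | VSl x \<Rightarrow> VInl x
      | VSr y \<Rightarrow> VInr y
      | VNull \<Rightarrow> z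
      | _ \<Rightarrow> VUndef)"

primrec ominus :: "('s, 'p, 'b) cstr \<Rightarrow> 's ty \<Rightarrow> ('p, 'b) val \<Rightarrow> ('p, 'b) val \<Rightarrow> ('p, 'b) val" where
  "ominus K TB v w = (case (v, w) of (VB x, VB y) \<Rightarrow> VB (bmi K x y) | _ \<Rightarrow> VUndef)"
| "ominus K (TF s A) v w =
     (case (v, w) of (VFun f, VFun g) \<Rightarrow> vfun K s (\<lambda>i. ominus K A (f i) (g i)) | _ \<Rightarrow> VUndef)"
| "ominus K (TProd A B) v w =
     (case (v, w) of (VPair x y, VPair x' y') \<Rightarrow> VPair (ominus K A x x') (ominus K B y y')
        | _ \<Rightarrow> VUndef)"
| "ominus K (TSum A B) v w =
     (case (v, w) of
        (VInl x, VInl y) \<Rightarrow> VCl (ominus K A x y)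
      | (VInl x, VInr y) \<Rightarrow> VSl x
      | (VInr x, VInl y) \<Rightarrow> VSr x
      | (VInr x, VInr y) \<Rightarrow> VCr (ominus K B x y)
      | _ \<Rightarrow> VUndef)"

section \<open>Expressions\<close>

text \<open>Type annotations (shapes, and object types where the transformation needs
oplus/ominus at a specific type) are carried in the syntax; typing checks them.
A user-defined operation carries its function f, a cache carrier C, and i, d.\<close>
datatype ('s, 'p, 'b) expr =
    Comp "('s, 'p, 'b) expr" "('s, 'p, 'b) expr"
  | Par "('s, 'p, 'b) expr" "('s, 'p, 'b) expr"
  | Id | Dup | Fst | Snd
  | Cst "'s ty" "('p, 'b) val"
  | Plus "'s ty"
  | Op "'s ty" "'s ty" "('p, 'b) val \<Rightarrow> ('p, 'b) val" "('p, 'b) val set"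
       "('p, 'b) val \<Rightarrow> ('p, 'b) val \<times> ('p, 'b) val"
       "('p, 'b) val \<Rightarrow> ('p, 'b) val \<Rightarrow> ('p, 'b) val \<times> ('p, 'b) val"
  | Map 's "('s, 'p, 'b) expr"
  | Zip 's
  | Get 's 'p
  | Set 's 'p
  | Reshape 's 's "'p \<Rightarrow> 'p"
  | Replicate 's
  | Tp 's 's
  | Filter 's "'p \<Rightarrow> bool"
  | Inl | Inr
  | Fuse "'s ty"
  | Distr "'s ty" "'s ty" "'s ty"
  | Case "'s ty" "'s ty" "('s, 'p, 'b) expr" "('s, 'p, 'b) expr"

definition consistent_inc ::
  "('s, 'p, 'b) cstr \<Rightarrow> 's ty \<Rightarrow> 's ty \<Rightarrow> (('p, 'b) val \<Rightarrow> ('p, 'b) val) \<Rightarrow> ('p, 'b) val set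
   \<Rightarrow> (('p, 'b) val \<Rightarrow> ('p, 'b) val \<times> ('p, 'b) val)
   \<Rightarrow> (('p, 'b) val \<Rightarrow> ('p, 'b) val \<Rightarrow> ('p, 'b) val \<times> ('p, 'b) val) \<Rightarrow> bool" where
  "consistent_inc K A B f C i d \<longleftrightarrow>
     (\<forall>x\<in>vals K A. f x \<in> vals K B) \<and>
     (\<forall>x\<in>vals K A. fst (i x) \<in> vals K B \<and> snd (i x) \<in> C) \<and>
     (\<forall>x'\<in>chgs K A. \<forall>c\<in>C. fst (d x' c) \<in> chgs K B \<and> snd (d x' c) \<in> C) \<and>
     (\<forall>x\<in>vals K A. fst (i x) = f x) \<and>
     (\<forall>x\<in>vals K A. \<forall>x'\<in>chgs K A.
        f (oplus K A x x') = oplus K B (f x) (fst (d x' (snd (i x)))) \<and>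
        snd (i (oplus K A x x')) = snd (d x' (snd (i x))))"

inductive hastype :: "('s, 'p, 'b) cstr \<Rightarrow> ('s, 'p, 'b) expr \<Rightarrow> 's ty \<Rightarrow> 's ty \<Rightarrow> bool" where
  "hastype K e1 A B \<Longrightarrow> hastype K e2 B C \<Longrightarrow> hastype K (Comp e1 e2) A C"
| "hastype K e1 A B \<Longrightarrow> hastype K e2 C D \<Longrightarrow> hastype K (Par e1 e2) (TProd A C) (TProd B D)"
| "hastype K Id A A"
| "hastype K Dup A (TProd A A)"
| "hastype K Fst (TProd A B) A"
| "hastype K Snd (TProd A B) B"
| "c \<in> vals K A \<Longrightarrow> hastype K (Cst A c) B A"
| "vals K A = chgs K A \<Longrightarrow> hastype K (Plus A) (TProd A A) A"
| "consistent_inc K A B f C i d \<Longrightarrow> hastype K (Op A B f C i d) A B"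
| "hastype K e A B \<Longrightarrow> hastype K (Map s e) (TF s A) (TF s B)"
| "hastype K (Zip s) (TProd (TF s A) (TF s B)) (TF s (TProd A B))"
| "i \<in> pos K s \<Longrightarrow> hastype K (Get s i) (TF s A) A"
| "i \<in> pos K s \<Longrightarrow> hastype K (Set s i) (TProd A (TF s A)) (TF s A)"
| "(\<forall>i\<in>pos K s2. r i \<in> pos K s1) \<Longrightarrow> hastype K (Reshape s1 s2 r) (TF s1 A) (TF s2 A)"
| "hastype K (Replicate s) A (TF s A)"
| "hastype K (Tp s1 s2) (TF s1 (TF s2 A)) (TF s2 (TF s1 A))"
| "hastype K (Filter s p) (TProd A (TF s A)) (TF s A)"
| "hastype K Inl A (TSum A B)"
| "hastype K Inr B (TSum A B)"
| "hastype K (Fuse A) (TSum A A) A"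
| "hastype K (Distr A B C) (TProd A (TSum B C)) (TSum (TProd A B) (TProd A C))"
| "hastype K e1 A1 B1 \<Longrightarrow> hastype K e2 A2 B2 \<Longrightarrow>
     hastype K (Case B1 B2 e1 e2) (TSum A1 A2) (TSum B1 B2)"

primrec plus_ac :: "('s, 'p, 'b) cstr \<Rightarrow> ('s, 'p, 'b) expr \<Rightarrow> bool" where
  "plus_ac K (Comp e1 e2) = (plus_ac K e1 \<and> plus_ac K e2)"
| "plus_ac K (Par e1 e2) = (plus_ac K e1 \<and> plus_ac K e2)"
| "plus_ac K Id = True"
| "plus_ac K Dup = True"
| "plus_ac K Fst = True"
| "plus_ac K Snd = True"
| "plus_ac K (Cst A c) = True"
| "plus_ac K (Plus A) =
     ((\<forall>x\<in>vals K A. \<forall>y\<in>vals K A. \<forall>z\<in>vals K A.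
        oplus K A (oplus K A x y) z = oplus K A x (oplus K A y z)) \<and>
      (\<forall>x\<in>vals K A. \<forall>y\<in>vals K A. oplus K A x y = oplus K A y x))"
| "plus_ac K (Op A B f C i d) = True"
| "plus_ac K (Map s e) = plus_ac K e"
| "plus_ac K (Zip s) = True"
| "plus_ac K (Get s i) = True"
| "plus_ac K (Set s i) = True"
| "plus_ac K (Reshape s1 s2 r) = True"
| "plus_ac K (Replicate s) = True"
| "plus_ac K (Tp s1 s2) = True"
| "plus_ac K (Filter s p) = True"
| "plus_ac K Inl = True"
| "plus_ac K Inr = True"
| "plus_ac K (Fuse A) = True"
| "plus_ac K (Distr A B C) = True"
| "plus_ac K (Case B1 B2 e1 e2) = (plus_ac K e1 \<and> plus_ac K e2)"

section \<open>Denotation\<close>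

primrec den :: "('s, 'p, 'b) cstr \<Rightarrow> ('s, 'p, 'b) expr \<Rightarrow> ('p, 'b) val \<Rightarrow> ('p, 'b) val" where
  "den K (Comp e1 e2) = den K e2 \<circ> den K e1"
| "den K (Par e1 e2) = (\<lambda>v. case v of VPair x y \<Rightarrow> VPair (den K e1 x) (den K e2 y) | _ \<Rightarrow> VUndef)"
| "den K Id = (\<lambda>x. x)"
| "den K Dup = (\<lambda>x. VPair x x)"
| "den K Fst = (\<lambda>v. case v of VPair x y \<Rightarrow> x | _ \<Rightarrow> VUndef)"
| "den K Snd = (\<lambda>v. case v of VPair x y \<Rightarrow> y | _ \<Rightarrow> VUndef)"
| "den K (Cst A c) = (\<lambda>x. c)"
| "den K (Plus A) = (\<lambda>v. case v of VPair x y \<Rightarrow> oplus K A x y | _ \<Rightarrow> VUndef)"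
| "den K (Op A B f C i d) = f"
| "den K (Map s e) = (\<lambda>v. case v of VFun x \<Rightarrow> vfun K s (\<lambda>i. den K e (x i)) | _ \<Rightarrow> VUndef)"
| "den K (Zip s) = (\<lambda>v. case v of VPair (VFun x) (VFun y) \<Rightarrow> vfun K s (\<lambda>i. VPair (x i) (y i))
                                 | _ \<Rightarrow> VUndef)"
| "den K (Get s i) = (\<lambda>v. case v of VFun x \<Rightarrow> x i | _ \<Rightarrow> VUndef)"
| "den K (Set s i) = (\<lambda>v. case v of VPair x (VFun a) \<Rightarrow> vfun K s (\<lambda>j. if i = j then x else a j)
                                 | _ \<Rightarrow> VUndef)"
| "den K (Reshape s1 s2 r) = (\<lambda>v. case v of VFun x \<Rightarrow> vfun K s2 (\<lambda>i. x (r i)) | _ \<Rightarrow> VUndef)"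
| "den K (Replicate s) = (\<lambda>x. vfun K s (\<lambda>i. x))"
| "den K (Tp s1 s2) = (\<lambda>v. case v of VFun x \<Rightarrow>
       vfun K s2 (\<lambda>i. vfun K s1 (\<lambda>j. case x j of VFun y \<Rightarrow> y i | _ \<Rightarrow> VUndef)) | _ \<Rightarrow> VUndef)"
| "den K (Filter s p) = (\<lambda>v. case v of VPair x (VFun a) \<Rightarrow> vfun K s (\<lambda>i. if p i then a i else x)
                                 | _ \<Rightarrow> VUndef)"
| "den K Inl = VInl"
| "den K Inr = VInr"
| "den K (Fuse A) = (\<lambda>v. case v of VInl x \<Rightarrow> x | VInr x \<Rightarrow> x | _ \<Rightarrow> VUndef)"
| "den K (Distr A B C) = (\<lambda>v. case v of VPair x (VInl y) \<Rightarrow> VInl (VPair x y)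
                                 | VPair x (VInr y) \<Rightarrow> VInr (VPair x y) | _ \<Rightarrow> VUndef)"
| "den K (Case B1 B2 e1 e2) = (\<lambda>v. case v of VInl x \<Rightarrow> VInl (den K e1 x)
                                 | VInr x \<Rightarrow> VInr (den K e2 x) | _ \<Rightarrow> VUndef)"

section \<open>Incrementalization transformation\<close>

type_synonym ('p, 'b) inc =
  "(('p, 'b) val \<Rightarrow> ('p, 'b) val \<times> ('p, 'b) val)
   \<times> (('p, 'b) val \<Rightarrow> ('p, 'b) val \<Rightarrow> ('p, 'b) val \<times> ('p, 'b) val)"

text \<open>Primitives with cache type Unit: derivative = defining equation applied to the change.\<close>
definition unit_inc :: "(('p, 'b) val \<Rightarrow> ('p, 'b) val) \<Rightarrow> ('p, 'b) inc" where
  "unit_inc f = ((\<lambda>x. (f x, VUnit)), (\<lambda>x' c. (f x', VUnit)))"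

definition comp_inc :: "('p, 'b) inc \<Rightarrow> ('p, 'b) inc \<Rightarrow> ('p, 'b) inc" where
  "comp_inc F G =
    ((\<lambda>x. let (y, c1) = fst F x; (z, c2) = fst G y in (z, VPair c1 c2)),
     (\<lambda>x' c. case c of VPair c1 c2 \<Rightarrow>
         (let (y', c1') = snd F x' c1; (z', c2') = snd G y' c2 in (z', VPair c1' c2'))
       | _ \<Rightarrow> (VUndef, VUndef)))"

definition par_inc :: "('p, 'b) inc \<Rightarrow> ('p, 'b) inc \<Rightarrow> ('p, 'b) inc" where
  "par_inc F G =
    ((\<lambda>v. case v of VPair x y \<Rightarrow>
         (let (u, c1) = fst F x; (w, c2) = fst G y in (VPair u w, VPair c1 c2))
       | _ \<Rightarrow> (VUndef, VUndef)),
     (\<lambda>v c. case (v, c) of (VPair x' y', VPair c1 c2) \<Rightarrow>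
         (let (u', c1') = snd F x' c1; (w', c2') = snd G y' c2 in (VPair u' w', VPair c1' c2'))
       | _ \<Rightarrow> (VUndef, VUndef)))"

definition map_inc :: "('s, 'p, 'b) cstr \<Rightarrow> 's \<Rightarrow> ('p, 'b) inc \<Rightarrow> ('p, 'b) inc" where
  "map_inc K s F =
    ((\<lambda>v. case v of VFun x \<Rightarrow>
         (vfun K s (\<lambda>j. fst (fst F (x j))), vfun K s (\<lambda>j. snd (fst F (x j))))
       | _ \<Rightarrow> (VUndef, VUndef)),
     (\<lambda>v c. case (v, c) of (VFun x', VFun cs) \<Rightarrow>
         (vfun K s (\<lambda>j. fst (snd F (x' j) (cs j))), vfun K s (\<lambda>j. snd (snd F (x' j) (cs j))))
       | _ \<Rightarrow> (VUndef, VUndef)))"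

definition fuse_d :: "('s, 'p, 'b) cstr \<Rightarrow> 's ty \<Rightarrow> ('p, 'b) val \<Rightarrow> ('p, 'b) val \<Rightarrow> ('p, 'b) val \<times> ('p, 'b) val" where
  "fuse_d K A v c =
     (case v of
        VCl x' \<Rightarrow> (case c of VInl x \<Rightarrow> (x', VInl (oplus K A x x'))
                           | VInr y \<Rightarrow> (ominus K A y y, VInr y) | _ \<Rightarrow> (VUndef, VUndef))
      | VCr y' \<Rightarrow> (case c of VInl x \<Rightarrow> (ominus K A x x, VInl x)
                           | VInr y \<Rightarrow> (y', VInr (oplus K A y y')) | _ \<Rightarrow> (VUndef, VUndef))
      | VSl x \<Rightarrow> (case c of VInl x0 \<Rightarrow> (ominus K A x x0, VInl x)
                          | VInr x0 \<Rightarrow> (ominus K A x x0, VInl x) | _ \<Rightarrow> (VUndef, VUndef))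
      | VSr y \<Rightarrow> (case c of VInl y0 \<Rightarrow> (ominus K A y y0, VInr y)
                          | VInr y0 \<Rightarrow> (ominus K A y y0, VInr y) | _ \<Rightarrow> (VUndef, VUndef))
      | VNull \<Rightarrow> (case c of VInl x \<Rightarrow> (ominus K A x x, VInl x)
                          | VInr x \<Rightarrow> (ominus K A x x, VInr x) | _ \<Rightarrow> (VUndef, VUndef))
      | _ \<Rightarrow> (VUndef, VUndef))"

definition fuse_inc :: "('s, 'p, 'b) cstr \<Rightarrow> 's ty \<Rightarrow> ('p, 'b) inc" where
  "fuse_inc K A =
    ((\<lambda>v. case v of VInl x \<Rightarrow> (x, VInl x) | VInr x \<Rightarrow> (x, VInr x) | _ \<Rightarrow> (VUndef, VUndef)),
     fuse_d K A)"

definition distr_d :: "('s, 'p, 'b) cstr \<Rightarrow> 's ty \<Rightarrow> 's ty \<Rightarrow> 's ty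
    \<Rightarrow> ('p, 'b) val \<Rightarrow> ('p, 'b) val \<Rightarrow> ('p, 'b) val \<times> ('p, 'b) val" where
  "distr_d K A B C v c =
     (case (v, c) of
        (VPair x' w', VPair x z) \<Rightarrow>
          (case w' of
             VCl y' \<Rightarrow> (case z of
                 VInl y \<Rightarrow> (VCl (VPair x' y'), VPair (oplus K A x x') (VInl (oplus K B y y')))
               | VInr y \<Rightarrow> (VCr (VPair x' (ominus K C y y)), VPair (oplus K A x x') (VInr y))
               | _ \<Rightarrow> (VUndef, VUndef))
           | VCr y' \<Rightarrow> (case z of
                 VInl y \<Rightarrow> (VCl (VPair x' (ominus K B y y)), VPair (oplus K A x x') (VInl y))
               | VInr y \<Rightarrow> (VCr (VPair x' y'), VPair (oplus K A x x') (VInr (oplus K C y y')))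
               | _ \<Rightarrow> (VUndef, VUndef))
           | VSl y \<Rightarrow> (VSl (VPair (oplus K A x x') y), VPair (oplus K A x x') (VInl y))
           | VSr y \<Rightarrow> (VSr (VPair (oplus K A x x') y), VPair (oplus K A x x') (VInr y))
           | VNull \<Rightarrow> (case z of
                 VInl y \<Rightarrow> (VCl (VPair x' (ominus K B y y)), VPair (oplus K A x x') (VInl y))
               | VInr y \<Rightarrow> (VCr (VPair x' (ominus K C y y)), VPair (oplus K A x x') (VInr y))
               | _ \<Rightarrow> (VUndef, VUndef))
           | _ \<Rightarrow> (VUndef, VUndef))
      | _ \<Rightarrow> (VUndef, VUndef))"

definition distr_inc :: "('s, 'p, 'b) cstr \<Rightarrow> 's ty \<Rightarrow> 's ty \<Rightarrow> 's ty \<Rightarrow> ('p, 'b) inc" where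
  "distr_inc K A B C =
    ((\<lambda>v. case v of VPair x (VInl y) \<Rightarrow> (VInl (VPair x y), VPair x (VInl y))
                  | VPair x (VInr y) \<Rightarrow> (VInr (VPair x y), VPair x (VInr y))
                  | _ \<Rightarrow> (VUndef, VUndef)),
     distr_d K A B C)"

definition case_d :: "('s, 'p, 'b) cstr \<Rightarrow> 's ty \<Rightarrow> 's ty \<Rightarrow> ('p, 'b) inc \<Rightarrow> ('p, 'b) inc
    \<Rightarrow> ('p, 'b) val \<Rightarrow> ('p, 'b) val \<Rightarrow> ('p, 'b) val \<times> ('p, 'b) val" where
  "case_d K B1 B2 F G v z =
     (case v of
        VCl x' \<Rightarrow> (case z of
            VInl (VPair c y) \<Rightarrow> (let (y', c') = snd F x' c in (VCl y', VInl (VPair c' (oplus K B1 y y'))))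
          | VInr (VPair c y) \<Rightarrow> (VNull, VInr (VPair c y))
          | _ \<Rightarrow> (VUndef, VUndef))
      | VCr x' \<Rightarrow> (case z of
            VInl (VPair c y) \<Rightarrow> (VNull, VInl (VPair c y))
          | VInr (VPair c y) \<Rightarrow> (let (y', c') = snd G x' c in (VCr y', VInr (VPair c' (oplus K B2 y y'))))
          | _ \<Rightarrow> (VUndef, VUndef))
      | VSl x \<Rightarrow> (let (y, c) = fst F x in
          (case z of
             VInl (VPair c0 y0) \<Rightarrow> (VCl (ominus K B1 y y0), VInl (VPair c y))
           | VInr _ \<Rightarrow> (VSl y, VInl (VPair c y))
           | _ \<Rightarrow> (VUndef, VUndef)))
      | VSr x \<Rightarrow> (let (y, c) = fst G x in
          (case z of
             VInl _ \<Rightarrow> (VSr y, VInr (VPair c y))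
           | VInr (VPair c0 y0) \<Rightarrow> (VCr (ominus K B2 y y0), VInr (VPair c y))
           | _ \<Rightarrow> (VUndef, VUndef)))
      | VNull \<Rightarrow> (VNull, z)
      | _ \<Rightarrow> (VUndef, VUndef))"

definition case_inc :: "('s, 'p, 'b) cstr \<Rightarrow> 's ty \<Rightarrow> 's ty \<Rightarrow> ('p, 'b) inc \<Rightarrow> ('p, 'b) inc
    \<Rightarrow> ('p, 'b) inc" where
  "case_inc K B1 B2 F G =
    ((\<lambda>v. case v of VInl x \<Rightarrow> (let (y, c) = fst F x in (VInl y, VInl (VPair c y)))
                  | VInr x \<Rightarrow> (let (y, c) = fst G x in (VInr y, VInr (VPair c y)))
                  | _ \<Rightarrow> (VUndef, VUndef)),
     case_d K B1 B2 F G)"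

primrec inc :: "('s, 'p, 'b) cstr \<Rightarrow> ('s, 'p, 'b) expr \<Rightarrow> ('p, 'b) inc" where
  "inc K (Comp e1 e2) = comp_inc (inc K e1) (inc K e2)"
| "inc K (Par e1 e2) = par_inc (inc K e1) (inc K e2)"
| "inc K Id = unit_inc (den K Id)"
| "inc K Dup = unit_inc (den K Dup)"
| "inc K Fst = unit_inc (den K Fst)"
| "inc K Snd = unit_inc (den K Snd)"
| "inc K (Cst A c) = ((\<lambda>x. (c, VUnit)), (\<lambda>x' u. (ominus K A c c, VUnit)))"
| "inc K (Plus A) =
     ((\<lambda>v. case v of VPair x y \<Rightarrow> (oplus K A x y, VUnit) | _ \<Rightarrow> (VUndef, VUndef)),
      (\<lambda>v u. case v of VPair x' y' \<Rightarrow> (oplus K A x' y', VUnit) | _ \<Rightarrow> (VUndef, VUndef)))"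
| "inc K (Op A B f C i d) = (i, d)"
| "inc K (Map s e) = map_inc K s (inc K e)"
| "inc K (Zip s) = unit_inc (den K (Zip s))"
| "inc K (Get s i) = unit_inc (den K (Get s i))"
| "inc K (Set s i) = unit_inc (den K (Set s i))"
| "inc K (Reshape s1 s2 r) = unit_inc (den K (Reshape s1 s2 r))"
| "inc K (Replicate s) = unit_inc (den K (Replicate s))"
| "inc K (Tp s1 s2) = unit_inc (den K (Tp s1 s2))"
| "inc K (Filter s p) = unit_inc (den K (Filter s p))"
| "inc K Inl = ((\<lambda>x. (VInl x, VUnit)), (\<lambda>x' u. (VCl x', VUnit)))"
| "inc K Inr = ((\<lambda>x. (VInr x, VUnit)), (\<lambda>y' u. (VCr y', VUnit)))"
| "inc K (Fuse A) = fuse_inc K A"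
| "inc K (Distr A B C) = distr_inc K A B C"
| "inc K (Case B1 B2 e1 e2) = case_inc K B1 B2 (inc K e1) (inc K e2)"

text \<open>iter at output type B (needed for oplus at B).\<close>
fun iter :: "('s, 'p, 'b) cstr \<Rightarrow> 's ty \<Rightarrow> ('p, 'b) inc \<Rightarrow> ('p, 'b) val \<Rightarrow> ('p, 'b) val list
    \<Rightarrow> ('p, 'b) val \<times> ('p, 'b) val" where
  "iter K B F x [] = fst F x"
| "iter K B F x (x' # xs') =
     (let (y, c1) = iter K B F x xs'; (y', c2) = snd F x' c1 in (oplus K B y y', c2))"

fun sum_chg :: "('s, 'p, 'b) cstr \<Rightarrow> 's ty \<Rightarrow> ('p, 'b) val \<Rightarrow> ('p, 'b) val list \<Rightarrow> ('p, 'b) val" where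
  "sum_chg K A x [] = x"
| "sum_chg K A x (x' # xs') = oplus K A (sum_chg K A x xs') x'"

end

theory Submission
  imports Defs
begin

lemma vfun_id: "(\<forall>i. i \<notin> pos K s \<longrightarrow> f i = VUndef) \<Longrightarrow> vfun K s f = VFun f"
  unfolding vfun_def by (rule arg_cong[where f=VFun]) auto

lemma vfun_vals[simp]: "vfun K s g \<in> vals K (TF s A) \<longleftrightarrow> (\<forall>i\<in>pos K s. g i \<in> vals K A)"
  unfolding vfun_def by auto

lemma vfun_chgs[simp]: "vfun K s g \<in> chgs K (TF s A) \<longleftrightarrow> (\<forall>i\<in>pos K s. g i \<in> chgs K A)"
  unfolding vfun_def by auto

lemma vfun_app: "vfun K s g = VFun h \<Longrightarrow> i \<in> pos K s \<Longrightarrow> h i = g i"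
  unfolding vfun_def by auto

lemma oplus_vfun[simp]: "oplus K (TF s A) (vfun K s f) (vfun K s g) = vfun K s (\<lambda>i. oplus K A (f i) (g i))"
  by (simp add: vfun_def) (rule ext; auto)

lemma ominus_vfun[simp]: "ominus K (TF s A) (vfun K s f) (vfun K s g) = vfun K s (\<lambda>i. ominus K A (f i) (g i))"
  by (simp add: vfun_def) (rule ext; auto)

lemma vfun_cong: "(\<And>i. i \<in> pos K s \<Longrightarrow> f i = g i) \<Longrightarrow> vfun K s f = vfun K s g"
  unfolding vfun_def by (rule arg_cong[where f=VFun]) auto

lemma vals_TF_E: "x \<in> vals K (TF s A) \<Longrightarrow> (\<And>f. x = vfun K s f \<Longrightarrow> (\<forall>i\<in>pos K s. f i \<in> vals K A) \<Longrightarrow> P) \<Longrightarrow> P"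
  by simp (metis vfun_id)

lemma chgs_TF_E: "x \<in> chgs K (TF s A) \<Longrightarrow> (\<And>f. x = vfun K s f \<Longrightarrow> (\<forall>i\<in>pos K s. f i \<in> chgs K A) \<Longrightarrow> P) \<Longrightarrow> P"
  by simp (metis vfun_id)

context fixes K :: "('s, 'p, 'b) cstr" assumes bcs: "base_change_structure K"
begin

lemma oplus_closed: "x \<in> vals K A \<Longrightarrow> x' \<in> chgs K A \<Longrightarrow> oplus K A x x' \<in> vals K A"
proof (induction A arbitrary: x x')
  case TB then show ?case using bcs by (auto simp: base_change_structure_def)
next
  case (TF s A) then show ?case
    by (elim vals_TF_E chgs_TF_E) (simp del: oplus.simps vals.simps chgs.simps)
next
  case (TProd A1 A2) then show ?case by auto
next
  case (TSum A1 A2) then show ?case by auto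
qed

lemma ominus_closed: "x \<in> vals K A \<Longrightarrow> y \<in> vals K A \<Longrightarrow> ominus K A x y \<in> chgs K A"
proof (induction A arbitrary: x y)
  case TB then show ?case using bcs by (auto simp: base_change_structure_def)
next
  case (TF s A) then show ?case
    by (elim vals_TF_E) (simp del: ominus.simps vals.simps chgs.simps)
next
  case (TProd A1 A2) then show ?case by auto
next
  case (TSum A1 A2) then show ?case by auto
qed

lemma oplus_ominus: "x \<in> vals K A \<Longrightarrow> y \<in> vals K A \<Longrightarrow> oplus K A y (ominus K A x y) = x"
proof (induction A arbitrary: x y)
  case TB then show ?case using bcs by (auto simp: base_change_structure_def)
next
  case (TF s A) then show ?case
    by (elim vals_TF_E) (simp del: oplus.simps ominus.simps vals.simps chgs.simps, rule vfun_cong, simp)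
next
  case (TProd A1 A2) then show ?case by auto
next
  case (TSum A1 A2) then show ?case by auto
qed

lemma oplus_ominus_self: "x \<in> vals K A \<Longrightarrow> oplus K A x (ominus K A x x) = x"
  by (rule oplus_ominus)

end

primrec cinv :: "('s, 'p, 'b) cstr \<Rightarrow> ('s, 'p, 'b) expr \<Rightarrow> ('p, 'b) val \<Rightarrow> ('p, 'b) val \<Rightarrow> bool" where
  "cinv K (Comp e1 e2) = (\<lambda>x c. case c of VPair c1 c2 \<Rightarrow> cinv K e1 x c1 \<and> cinv K e2 (den K e1 x) c2 | _ \<Rightarrow> False)"
| "cinv K (Par e1 e2) = (\<lambda>v c. case (v, c) of (VPair x y, VPair c1 c2) \<Rightarrow> cinv K e1 x c1 \<and> cinv K e2 y c2 | _ \<Rightarrow> False)"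
| "cinv K Id = (\<lambda>x c. True)"
| "cinv K Dup = (\<lambda>x c. True)"
| "cinv K Fst = (\<lambda>x c. True)"
| "cinv K Snd = (\<lambda>x c. True)"
| "cinv K (Cst A c0) = (\<lambda>x c. True)"
| "cinv K (Plus A) = (\<lambda>x c. True)"
| "cinv K (Op A B f C i d) = (\<lambda>x c. c = snd (i x))"
| "cinv K (Map s e) = (\<lambda>v c. case (v, c) of (VFun x, VFun cs) \<Rightarrow> (\<forall>j\<in>pos K s. cinv K e (x j) (cs j)) | _ \<Rightarrow> False)"
| "cinv K (Zip s) = (\<lambda>x c. True)"
| "cinv K (Get s i) = (\<lambda>x c. True)"
| "cinv K (Set s i) = (\<lambda>x c. True)"
| "cinv K (Reshape s1 s2 r) = (\<lambda>x c. True)"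
| "cinv K (Replicate s) = (\<lambda>x c. True)"
| "cinv K (Tp s1 s2) = (\<lambda>x c. True)"
| "cinv K (Filter s p) = (\<lambda>x c. True)"
| "cinv K Inl = (\<lambda>x c. True)"
| "cinv K Inr = (\<lambda>x c. True)"
| "cinv K (Fuse A) = (\<lambda>x c. c = x)"
| "cinv K (Distr A B C) = (\<lambda>x c. c = x)"
| "cinv K (Case B1 B2 e1 e2) = (\<lambda>v c. case (v, c) of
      (VInl x, VInl (VPair c y)) \<Rightarrow> cinv K e1 x c \<and> y = den K e1 x
    | (VInr x, VInr (VPair c y)) \<Rightarrow> cinv K e2 x c \<and> y = den K e2 x
    | _ \<Rightarrow> False)"

definition good :: "('s, 'p, 'b) cstr \<Rightarrow> ('s, 'p, 'b) expr \<Rightarrow> 's ty \<Rightarrow> 's ty \<Rightarrow> bool" where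
 "good K e A B \<longleftrightarrow>
 (\<forall>x\<in>vals K A. den K e x \<in> vals K B) \<and>
 (\<forall>x\<in>vals K A. fst (fst (inc K e) x) = den K e x \<and> cinv K e x (snd (fst (inc K e) x))) \<and>
 (\<forall>x\<in>vals K A. \<forall>x'\<in>chgs K A. \<forall>c. cinv K e x c \<longrightarrow>
    fst (snd (inc K e) x' c) \<in> chgs K B \<and>
    den K e (oplus K A x x') = oplus K B (den K e x) (fst (snd (inc K e) x' c)) \<and>
    cinv K e (oplus K A x x') (snd (snd (inc K e) x' c)))"

lemma unit_good:
  assumes "inc K e = unit_inc f" "den K e = f" "cinv K e = (\<lambda>x c. True)"
    "\<And>x. x \<in> vals K A \<Longrightarrow> f x \<in> vals K B"
    "\<And>x'. x' \<in> chgs K A \<Longrightarrow> f x' \<in> chgs K B"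
    "\<And>x x'. x \<in> vals K A \<Longrightarrow> x' \<in> chgs K A \<Longrightarrow> f (oplus K A x x') = oplus K B (f x) (f x')"
  shows "good K e A B"
  using assms unfolding good_def unit_inc_def by auto

lemma good_Id: "good K Id A A"
  by (rule unit_good) auto
lemma good_Dup: "good K Dup A (TProd A A)"
  by (rule unit_good) auto
lemma good_Fst: "good K Fst (TProd A B) A"
  by (rule unit_good) auto
lemma good_Snd: "good K Snd (TProd A B) B"
  by (rule unit_good) auto
lemma good_Inl: "good K Inl A (TSum A B)"
  unfolding good_def by auto
lemma good_Inr: "good K Inr B (TSum A B)"
  unfolding good_def by auto

lemma good_Zip: "good K (Zip s) (TProd (TF s A) (TF s B)) (TF s (TProd A B))"
  apply (rule unit_good)
  apply (auto simp: vfun_def intro!: ext)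
  done

lemma good_Get: "i \<in> pos K s \<Longrightarrow> good K (Get s i) (TF s A) A"
  apply (rule unit_good)
  apply (auto simp: vfun_def intro!: ext)
  done

lemma good_Set: "i \<in> pos K s \<Longrightarrow> good K (Set s i) (TProd A (TF s A)) (TF s A)"
  apply (rule unit_good)
  apply (auto simp: vfun_def intro!: ext)
  done

lemma good_Reshape: "(\<forall>i\<in>pos K s2. r i \<in> pos K s1) \<Longrightarrow> good K (Reshape s1 s2 r) (TF s1 A) (TF s2 A)"
  apply (rule unit_good)
  apply (auto simp: vfun_def intro!: ext)
  done

lemma good_Replicate: "good K (Replicate s) A (TF s A)"
  apply (rule unit_good)
  apply (auto simp: vfun_def intro!: ext)
  done

lemma good_Tp: "good K (Tp s1 s2) (TF s1 (TF s2 A)) (TF s2 (TF s1 A))"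
  apply (rule unit_good)
       apply (simp; fail)+
  subgoal
    apply (auto simp: vfun_def intro!: ext)
    apply (drule (1) bspec)+
    apply (auto simp: vfun_def)
    done
  subgoal
    apply (auto simp: vfun_def intro!: ext)
    apply (drule (1) bspec)+
    apply (auto simp: vfun_def)
    done
  subgoal
    apply (auto simp: vfun_def intro!: ext)
    apply (drule (1) bspec)+
    apply (auto simp: vfun_def)
    done
  done

lemma good_Filter: "good K (Filter s p) (TProd A (TF s A)) (TF s A)"
  apply (rule unit_good)
  apply (auto simp: vfun_def intro!: ext)
  done

lemma good_Op: "consistent_inc K A B f C i d \<Longrightarrow> good K (Op A B f C i d) A B"
  unfolding good_def consistent_inc_def by auto

context fixes K :: "('s, 'p, 'b) cstr" assumes bcs: "base_change_structure K"
begin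

lemma good_Cst: "c \<in> vals K A \<Longrightarrow> good K (Cst A c) B A"
  unfolding good_def using ominus_closed[OF bcs] oplus_ominus[OF bcs] by auto

lemma good_Plus:
  assumes vc: "vals K A = chgs K A"
    and ac: "plus_ac K (Plus A)"
  shows "good K (Plus A) (TProd A A) A"
proof -
  have as: "\<And>x y z. x \<in> vals K A \<Longrightarrow> y \<in> vals K A \<Longrightarrow> z \<in> vals K A \<Longrightarrow>
        oplus K A (oplus K A x y) z = oplus K A x (oplus K A y z)"
   and cm: "\<And>x y. x \<in> vals K A \<Longrightarrow> y \<in> vals K A \<Longrightarrow> oplus K A x y = oplus K A y x"
    using ac by auto
  have cl: "\<And>x y. x \<in> vals K A \<Longrightarrow> y \<in> vals K A \<Longrightarrow> oplus K A x y \<in> vals K A"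
    using oplus_closed[OF bcs] vc by auto
  have key: "oplus K A (oplus K A x x') (oplus K A y y') = oplus K A (oplus K A x y) (oplus K A x' y')"
    if h: "x \<in> vals K A" "x' \<in> vals K A" "y \<in> vals K A" "y' \<in> vals K A" for x x' y y'
  proof -
    have "oplus K A (oplus K A x x') (oplus K A y y') = oplus K A x (oplus K A x' (oplus K A y y'))"
      using h cl as by auto
    also have "oplus K A x' (oplus K A y y') = oplus K A (oplus K A x' y) y'"
      using h cl as by auto
    also have "oplus K A x' y = oplus K A y x'" using h cm by auto
    also have "oplus K A (oplus K A y x') y' = oplus K A y (oplus K A x' y')"
      using h cl as by auto
    also have "oplus K A x (oplus K A y (oplus K A x' y')) = oplus K A (oplus K A x y) (oplus K A x' y')"
      using h cl as by auto
    finally show ?thesis .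
  qed
  have G1: "den K (Plus A) v \<in> vals K A \<and> fst (fst (inc K (Plus A)) v) = den K (Plus A) v \<and> cinv K (Plus A) v (snd (fst (inc K (Plus A)) v))"
    if "v \<in> vals K (TProd A A)" for v
  proof -
    from that obtain a b where v: "v = VPair a b" "a \<in> vals K A" "b \<in> vals K A" by auto
    then show ?thesis using cl by simp
  qed
  have G2: "fst (snd (inc K (Plus A)) v' c) \<in> chgs K A \<and>
       den K (Plus A) (oplus K (TProd A A) v v') = oplus K A (den K (Plus A) v) (fst (snd (inc K (Plus A)) v' c)) \<and>
       cinv K (Plus A) (oplus K (TProd A A) v v') (snd (snd (inc K (Plus A)) v' c))"
    if "v \<in> vals K (TProd A A)" "v' \<in> chgs K (TProd A A)" for v v' c
  proof -
    from that obtain a b a' b' where v: "v = VPair a b" "a \<in> vals K A" "b \<in> vals K A"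
      "v' = VPair a' b'" "a' \<in> vals K A" "b' \<in> vals K A" using vc by auto
    then show ?thesis using cl key vc by simp
  qed
  show ?thesis unfolding good_def using G1 G2 by blast

qed

end


lemma good_Comp:
  assumes g1: "good K e1 A B" and g2: "good K e2 B C"
  shows "good K (Comp e1 e2) A C"
proof -
  have G1: "den K (Comp e1 e2) x \<in> vals K C \<and> fst (fst (inc K (Comp e1 e2)) x) = den K (Comp e1 e2) x
      \<and> cinv K (Comp e1 e2) x (snd (fst (inc K (Comp e1 e2)) x))"
    if x: "x \<in> vals K A" for x
  proof -
    obtain y c1 where y: "fst (inc K e1) x = (y, c1)" by fastforce
    have y1: "y = den K e1 x" "cinv K e1 x c1" "y \<in> vals K B"
      using g1 x y unfolding good_def by (metis fst_conv snd_conv)+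
    obtain z c2 where z: "fst (inc K e2) y = (z, c2)" by fastforce
    have z1: "z = den K e2 y" "cinv K e2 y c2" "z \<in> vals K C"
      using g2 y1(3) z unfolding good_def by (metis fst_conv snd_conv)+
    have "fst (inc K (Comp e1 e2)) x = (z, VPair c1 c2)"
      using y z by (simp add: comp_inc_def)
    then show ?thesis using y1 z1 by simp
  qed
  have G2: "fst (snd (inc K (Comp e1 e2)) x' c) \<in> chgs K C \<and>
       den K (Comp e1 e2) (oplus K A x x') = oplus K C (den K (Comp e1 e2) x) (fst (snd (inc K (Comp e1 e2)) x' c)) \<and>
       cinv K (Comp e1 e2) (oplus K A x x') (snd (snd (inc K (Comp e1 e2)) x' c))"
    if x: "x \<in> vals K A" "x' \<in> chgs K A" "cinv K (Comp e1 e2) x c" for x x' c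
  proof -
    obtain c1 c2 where c: "c = VPair c1 c2" "cinv K e1 x c1" "cinv K e2 (den K e1 x) c2"
      using x(3) by (auto split: val.splits)
    obtain y' c1' where y: "snd (inc K e1) x' c1 = (y', c1')" by fastforce
    have y1: "y' \<in> chgs K B" "den K e1 (oplus K A x x') = oplus K B (den K e1 x) y'"
      "cinv K e1 (oplus K A x x') c1'"
      using g1 x c y unfolding good_def by (metis fst_conv snd_conv)+
    have dv: "den K e1 x \<in> vals K B" using g1 x unfolding good_def by blast
    obtain z' c2' where z: "snd (inc K e2) y' c2 = (z', c2')" by fastforce
    have z1: "z' \<in> chgs K C" "den K e2 (oplus K B (den K e1 x) y') = oplus K C (den K e2 (den K e1 x)) z'"
      "cinv K e2 (oplus K B (den K e1 x) y') c2'"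
      using g2 dv y1(1) c z unfolding good_def by (metis fst_conv snd_conv)+
    have "snd (inc K (Comp e1 e2)) x' c = (z', VPair c1' c2')"
      using c y z by (simp add: comp_inc_def)
    then show ?thesis using y1 z1 by simp
  qed
  show ?thesis unfolding good_def using G1 G2 by blast
qed

lemma good_Par:
  assumes g1: "good K e1 A B" and g2: "good K e2 C D"
  shows "good K (Par e1 e2) (TProd A C) (TProd B D)"
proof -
  have G1: "den K (Par e1 e2) v \<in> vals K (TProd B D) \<and> fst (fst (inc K (Par e1 e2)) v) = den K (Par e1 e2) v
      \<and> cinv K (Par e1 e2) v (snd (fst (inc K (Par e1 e2)) v))"
    if v: "v \<in> vals K (TProd A C)" for v
  proof -
    obtain x y where xy: "v = VPair x y" "x \<in> vals K A" "y \<in> vals K C" using v by auto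
    obtain u c1 where u: "fst (inc K e1) x = (u, c1)" by fastforce
    have u1: "u = den K e1 x" "cinv K e1 x c1" "u \<in> vals K B"
      using g1 xy u unfolding good_def by (metis fst_conv snd_conv)+
    obtain w c2 where w: "fst (inc K e2) y = (w, c2)" by fastforce
    have w1: "w = den K e2 y" "cinv K e2 y c2" "w \<in> vals K D"
      using g2 xy w unfolding good_def by (metis fst_conv snd_conv)+
    have "fst (inc K (Par e1 e2)) v = (VPair u w, VPair c1 c2)"
      using xy u w by (simp add: par_inc_def)
    then show ?thesis using xy u1 w1 by simp
  qed
  have G2: "fst (snd (inc K (Par e1 e2)) v' c) \<in> chgs K (TProd B D) \<and>
       den K (Par e1 e2) (oplus K (TProd A C) v v') = oplus K (TProd B D) (den K (Par e1 e2) v) (fst (snd (inc K (Par e1 e2)) v' c)) \<and>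
       cinv K (Par e1 e2) (oplus K (TProd A C) v v') (snd (snd (inc K (Par e1 e2)) v' c))"
    if v: "v \<in> vals K (TProd A C)" "v' \<in> chgs K (TProd A C)" "cinv K (Par e1 e2) v c" for v v' c
  proof -
    obtain x y x' y' where xy: "v = VPair x y" "x \<in> vals K A" "y \<in> vals K C"
      "v' = VPair x' y'" "x' \<in> chgs K A" "y' \<in> chgs K C" using v by auto
    obtain c1 c2 where c: "c = VPair c1 c2" "cinv K e1 x c1" "cinv K e2 y c2"
      using v(3) xy by (auto split: val.splits)
    obtain u' c1' where u: "snd (inc K e1) x' c1 = (u', c1')" by fastforce
    have u1: "u' \<in> chgs K B" "den K e1 (oplus K A x x') = oplus K B (den K e1 x) u'"
      "cinv K e1 (oplus K A x x') c1'"
      using g1 xy c u unfolding good_def by (metis fst_conv snd_conv)+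
    obtain w' c2' where w: "snd (inc K e2) y' c2 = (w', c2')" by fastforce
    have w1: "w' \<in> chgs K D" "den K e2 (oplus K C y y') = oplus K D (den K e2 y) w'"
      "cinv K e2 (oplus K C y y') c2'"
      using g2 xy c w unfolding good_def by (metis fst_conv snd_conv)+
    have "snd (inc K (Par e1 e2)) v' c = (VPair u' w', VPair c1' c2')"
      using c xy u w by (simp add: par_inc_def)
    then show ?thesis using xy u1 w1 by simp
  qed
  show ?thesis unfolding good_def using G1 G2 by blast
qed

lemma den_Map_vfun: "den K (Map s e) (vfun K s f) = vfun K s (\<lambda>i. den K e (f i))"
  by (simp add: vfun_def) (rule ext, auto)

lemma inc_Map_vfun: "fst (inc K (Map s e)) (vfun K s f) =
   (vfun K s (\<lambda>j. fst (fst (inc K e) (f j))), vfun K s (\<lambda>j. snd (fst (inc K e) (f j))))"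
  by (simp add: map_inc_def vfun_def) (intro conjI ext, auto)

lemma dinc_Map_vfun: "snd (inc K (Map s e)) (vfun K s f) (VFun cs) =
   (vfun K s (\<lambda>j. fst (snd (inc K e) (f j) (cs j))), vfun K s (\<lambda>j. snd (snd (inc K e) (f j) (cs j))))"
  by (simp add: map_inc_def vfun_def) (intro conjI ext, auto)

lemma cinv_Map_vfun: "cinv K (Map s e) (vfun K s f) c \<longleftrightarrow> (\<exists>cs. c = VFun cs \<and> (\<forall>j\<in>pos K s. cinv K e (f j) (cs j)))"
  by (auto simp: vfun_def split: val.splits)

lemma cinv_Map_vfun2: "cinv K (Map s e) (vfun K s f) (vfun K s g) \<longleftrightarrow> (\<forall>j\<in>pos K s. cinv K e (f j) (g j))"
  by (auto simp: vfun_def)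

lemma good_Map:
  assumes g: "good K e A B"
  shows "good K (Map s e) (TF s A) (TF s B)"
proof -
  have G1: "den K (Map s e) v \<in> vals K (TF s B) \<and> fst (fst (inc K (Map s e)) v) = den K (Map s e) v
      \<and> cinv K (Map s e) v (snd (fst (inc K (Map s e)) v))"
    if v: "v \<in> vals K (TF s A)" for v
  proof -
    obtain f where f: "v = vfun K s f" "\<forall>i\<in>pos K s. f i \<in> vals K A" using v by (rule vals_TF_E)
    show ?thesis unfolding f(1) den_Map_vfun inc_Map_vfun fst_conv snd_conv cinv_Map_vfun2
      using g f(2) unfolding good_def by (auto simp del: vals.simps chgs.simps oplus.simps intro: vfun_cong)
  qed
  have G2: "fst (snd (inc K (Map s e)) v' c) \<in> chgs K (TF s B) \<and>
       den K (Map s e) (oplus K (TF s A) v v') = oplus K (TF s B) (den K (Map s e) v) (fst (snd (inc K (Map s e)) v' c)) \<and>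
       cinv K (Map s e) (oplus K (TF s A) v v') (snd (snd (inc K (Map s e)) v' c))"
    if v: "v \<in> vals K (TF s A)" "v' \<in> chgs K (TF s A)" "cinv K (Map s e) v c" for v v' c
  proof -
    obtain f where f: "v = vfun K s f" "\<forall>i\<in>pos K s. f i \<in> vals K A" using v(1) by (rule vals_TF_E)
    obtain f' where f': "v' = vfun K s f'" "\<forall>i\<in>pos K s. f' i \<in> chgs K A" using v(2) by (rule chgs_TF_E)
    obtain cs where cs: "c = VFun cs" "\<forall>j\<in>pos K s. cinv K e (f j) (cs j)"
      using v(3) unfolding f(1) cinv_Map_vfun by blast
    show ?thesis unfolding f(1) f'(1) cs(1) oplus_vfun den_Map_vfun dinc_Map_vfun fst_conv snd_conv
        cinv_Map_vfun2 vfun_chgs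
      using g f(2) f'(2) cs(2) unfolding good_def by (auto simp del: vals.simps chgs.simps oplus.simps intro: vfun_cong)
  qed
  show ?thesis unfolding good_def using G1 G2 by blast
qed

context fixes K :: "('s, 'p, 'b) cstr" assumes bcs: "base_change_structure K"
begin

lemmas oc = oplus_closed[OF bcs] ominus_closed[OF bcs] oplus_ominus[OF bcs]

lemma good_Fuse: "good K (Fuse A) (TSum A A) A"
  unfolding good_def
  by (auto simp: fuse_inc_def fuse_d_def oc simp del: vals.simps chgs.simps) (auto simp: oc)

lemma good_Distr: "good K (Distr A B C) (TProd A (TSum B C)) (TSum (TProd A B) (TProd A C))"
  unfolding good_def
  by (auto simp: distr_inc_def distr_d_def oc)

lemma good_Case:
  assumes g1: "good K e1 A1 B1" and g2: "good K e2 A2 B2"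
  shows "good K (Case B1 B2 e1 e2) (TSum A1 A2) (TSum B1 B2)"
proof -
  have a1: "\<And>x. x \<in> vals K A1 \<Longrightarrow> den K e1 x \<in> vals K B1"
   and b1: "\<And>x. x \<in> vals K A1 \<Longrightarrow> fst (fst (inc K e1) x) = den K e1 x \<and> cinv K e1 x (snd (fst (inc K e1) x))"
   and c1: "\<And>x x' c. x \<in> vals K A1 \<Longrightarrow> x' \<in> chgs K A1 \<Longrightarrow> cinv K e1 x c \<Longrightarrow>
    fst (snd (inc K e1) x' c) \<in> chgs K B1 \<and>
    den K e1 (oplus K A1 x x') = oplus K B1 (den K e1 x) (fst (snd (inc K e1) x' c)) \<and>
    cinv K e1 (oplus K A1 x x') (snd (snd (inc K e1) x' c))"
    using g1 unfolding good_def by (metis prod.collapse)+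
  have a2: "\<And>x. x \<in> vals K A2 \<Longrightarrow> den K e2 x \<in> vals K B2"
   and b2: "\<And>x. x \<in> vals K A2 \<Longrightarrow> fst (fst (inc K e2) x) = den K e2 x \<and> cinv K e2 x (snd (fst (inc K e2) x))"
   and c2: "\<And>x x' c. x \<in> vals K A2 \<Longrightarrow> x' \<in> chgs K A2 \<Longrightarrow> cinv K e2 x c \<Longrightarrow>
    fst (snd (inc K e2) x' c) \<in> chgs K B2 \<and>
    den K e2 (oplus K A2 x x') = oplus K B2 (den K e2 x) (fst (snd (inc K e2) x' c)) \<and>
    cinv K e2 (oplus K A2 x x') (snd (snd (inc K e2) x' c))"
    using g2 unfolding good_def by (metis prod.collapse)+
  let ?E = "Case B1 B2 e1 e2"
  have G1: "den K ?E v \<in> vals K (TSum B1 B2) \<and> fst (fst (inc K ?E) v) = den K ?E v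
      \<and> cinv K ?E v (snd (fst (inc K ?E) v))"
    if v: "v \<in> vals K (TSum A1 A2)" for v
  proof -
    from v consider x where "v = VInl x" "x \<in> vals K A1" | x where "v = VInr x" "x \<in> vals K A2" by auto
    then show ?thesis
    proof cases
      case 1
      obtain y c where "fst (inc K e1) x = (y, c)" by fastforce
      with 1 a1[of x] b1[of x] show ?thesis by (simp add: case_inc_def)
    next
      case 2
      obtain y c where "fst (inc K e2) x = (y, c)" by fastforce
      with 2 a2[of x] b2[of x] show ?thesis by (simp add: case_inc_def)
    qed
  qed
  have G2: "fst (snd (inc K ?E) v' c) \<in> chgs K (TSum B1 B2) \<and>
       den K ?E (oplus K (TSum A1 A2) v v') = oplus K (TSum B1 B2) (den K ?E v) (fst (snd (inc K ?E) v' c)) \<and>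
       cinv K ?E (oplus K (TSum A1 A2) v v') (snd (snd (inc K ?E) v' c))"
    if v: "v \<in> vals K (TSum A1 A2)" "v' \<in> chgs K (TSum A1 A2)" "cinv K ?E v c" for v v' c
  proof -
    from v(2) consider a' where "v' = VCl a'" "a' \<in> chgs K A1" | b' where "v' = VCr b'" "b' \<in> chgs K A2"
      | a where "v' = VSl a" "a \<in> vals K A1" | b where "v' = VSr b" "b \<in> vals K A2" | "v' = VNull"
      by auto
    note vc = this
    from v(1) consider x where "v = VInl x" "x \<in> vals K A1" | x where "v = VInr x" "x \<in> vals K A2" by auto
    then show ?thesis
    proof cases
      case L: (1 x)
      then obtain c0 y0 where c: "c = VInl (VPair c0 y0)" "cinv K e1 x c0" "y0 = den K e1 x"
        using v(3) by (auto split: val.splits)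
      have y0: "y0 \<in> vals K B1" using a1 L c by simp
      from vc show ?thesis
      proof cases
        case (1 a')
        obtain y' c' where yc: "snd (inc K e1) a' c0 = (y', c')" by fastforce
        show ?thesis using c1[OF L(2) 1(2) c(2)] yc 1 L c by (simp add: case_inc_def case_d_def)
      next
        case (2 b') then show ?thesis using L c by (simp add: case_inc_def case_d_def)
      next
        case (3 a)
        obtain y1 cc where ycc: "fst (inc K e1) a = (y1, cc)" by fastforce
        show ?thesis using ycc a1[OF 3(2)] b1[OF 3(2)] 3 L c y0 oc
          by (simp add: case_inc_def case_d_def split: prod.splits)
      next
        case (4 b)
        obtain y1 cc where ycc: "fst (inc K e2) b = (y1, cc)" by fastforce
        show ?thesis using ycc a2[OF 4(2)] b2[OF 4(2)] 4 L c
          by (simp add: case_inc_def case_d_def split: prod.splits)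
      next
        case 5 then show ?thesis using L c y0 by (simp add: case_inc_def case_d_def)
      qed
    next
      case R: (2 x)
      then obtain c0 y0 where c: "c = VInr (VPair c0 y0)" "cinv K e2 x c0" "y0 = den K e2 x"
        using v(3) by (auto split: val.splits)
      have y0: "y0 \<in> vals K B2" using a2 R c by simp
      from vc show ?thesis
      proof cases
        case (1 a') then show ?thesis using R c by (simp add: case_inc_def case_d_def)
      next
        case (2 b')
        obtain y' c' where yc: "snd (inc K e2) b' c0 = (y', c')" by fastforce
        show ?thesis using c2[OF R(2) 2(2) c(2)] yc 2 R c by (simp add: case_inc_def case_d_def)
      next
        case (3 a)
        obtain y1 cc where ycc: "fst (inc K e1) a = (y1, cc)" by fastforce
        show ?thesis using ycc a1[OF 3(2)] b1[OF 3(2)] 3 R c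
          by (simp add: case_inc_def case_d_def split: prod.splits)
      next
        case (4 b)
        obtain y1 cc where ycc: "fst (inc K e2) b = (y1, cc)" by fastforce
        show ?thesis using ycc a2[OF 4(2)] b2[OF 4(2)] 4 R c y0 oc
          by (simp add: case_inc_def case_d_def split: prod.splits)
      next
        case 5 then show ?thesis using R c y0 by (simp add: case_inc_def case_d_def)
      qed
    qed
  qed
  show ?thesis unfolding good_def using G1 G2 by blast
qed

end


lemma good_all:
  shows "hastype K e A B \<Longrightarrow> base_change_structure K \<Longrightarrow> plus_ac K e \<Longrightarrow> good K e A B"
proof (induction rule: hastype.induct)
  case 1 then show ?case by (auto intro: good_Comp)
next
  case 2 then show ?case by (auto intro: good_Par)
next
  case 3 then show ?case by (auto intro: good_Id)
next
  case 4 then show ?case by (auto intro: good_Dup)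
next
  case 5 then show ?case by (auto intro: good_Fst)
next
  case 6 then show ?case by (auto intro: good_Snd)
next
  case 7 then show ?case by (auto intro: good_Cst)
next
  case 8 then show ?case by (auto intro: good_Plus)
next
  case 9 then show ?case by (auto intro: good_Op)
next
  case 10 then show ?case by (auto intro: good_Map)
next
  case 11 then show ?case by (auto intro: good_Zip)
next
  case 12 then show ?case by (auto intro: good_Get)
next
  case 13 then show ?case by (auto intro: good_Set)
next
  case 14 then show ?case by (auto intro: good_Reshape)
next
  case 15 then show ?case by (auto intro: good_Replicate)
next
  case 16 then show ?case by (auto intro: good_Tp)
next
  case 17 then show ?case by (auto intro: good_Filter)
next
  case 18 then show ?case by (auto intro: good_Inl)
next
  case 19 then show ?case by (auto intro: good_Inr)
next
  case 20 then show ?case by (auto intro: good_Fuse)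
next
  case 21 then show ?case by (auto intro: good_Distr)
next
  case 22 then show ?case by (auto intro: good_Case)
qed

lemma iter_good:
  assumes bcs: "base_change_structure K" and g: "good K e A B"
  shows "x \<in> vals K A \<Longrightarrow> set xs' \<subseteq> chgs K A \<Longrightarrow>
    fst (iter K B (inc K e) x xs') = den K e (sum_chg K A x xs') \<and>
    cinv K e (sum_chg K A x xs') (snd (iter K B (inc K e) x xs')) \<and>
    sum_chg K A x xs' \<in> vals K A"
proof (induction xs')
  case Nil then show ?case using g unfolding good_def by simp
next
  case (Cons x' xs')
  then have IH: "fst (iter K B (inc K e) x xs') = den K e (sum_chg K A x xs')"
    "cinv K e (sum_chg K A x xs') (snd (iter K B (inc K e) x xs'))"
    "sum_chg K A x xs' \<in> vals K A" and x': "x' \<in> chgs K A" by auto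
  obtain y c1 where yc: "iter K B (inc K e) x xs' = (y, c1)" by fastforce
  obtain y' c2 where yc2: "snd (inc K e) x' c1 = (y', c2)" by fastforce
  have it: "iter K B (inc K e) x (x' # xs') = (oplus K B y y', c2)" using yc yc2 by simp
  have "den K e (oplus K A (sum_chg K A x xs') x') = oplus K B (den K e (sum_chg K A x xs')) y' \<and>
     cinv K e (oplus K A (sum_chg K A x xs') x') c2"
    using g IH x' yc yc2 unfolding good_def by (metis fst_conv snd_conv)
  then show ?case using it IH yc oplus_closed[OF bcs IH(3) x'] by simp
qed

theorem theorem5p6:
  fixes K :: "('s, 'p, 'b) cstr" and e :: "('s, 'p, 'b) expr" and A B :: "'s ty"
  assumes "base_change_structure K"
    and "hastype K e A B"
    and "plus_ac K e"
    and "x \<in> vals K A"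
    and "set xs' \<subseteq> chgs K A"
  shows "fst (iter K B (inc K e) x xs') = den K e (sum_chg K A x xs')"
  using iter_good[OF assms(1) good_all[OF assms(2,1,3)] assms(4,5)] by blast

end
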